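(* Fix $h>0$ and $\lambda\ge 0$, and consider the Markov decision process with state $\Delta\in\{1,2,3,\dots\}$ (the discretized age of information), action $\delta\in\{0,1\}$, deterministic transitions $\Delta'=\Delta+1$ if $\delta=0$ and $\Delta'=1$ if $\delta=1$, and per-stage cost $\bar U(\Delta,\delta)=U(\Delta)+\lambda\delta$, where $$U(\Delta)=\mathrm{tr}\Big(M_1\sum_{i=0}^{\Delta-1}e^{\tilde A ih}\,\tilde G^h\,e^{\tilde A^\top ih}\Big).$$ For $\beta\in(0,1)$ let $V^h_{\beta,\lambda}(\Delta)$ be the optimal $\beta$-discounted value function (infimum over admissible sensing policies of $\mathbb E[\sum_{k\ge0}\beta^k\bar U(\Delta_k,\delta_k)]$ starting from $\Delta_0=\Delta$). Let $\beta_\ell\nearrow 1$, let $\eta_{\beta_\ell}$ be thresholds such that the policy $\delta_k=\mathbb I[\Delta_k\ge \eta_{\beta_\ell}]$ is $\beta_\ell$-optimal, and let $\bar\eta_\lambda$ be the limit of $\eta_{\beta_{\ell_p}}$ along a converging subsequence $\beta_{\ell_p}$. Then the limit $\bar V^h_\lambda:=\lim_{\beta\nearrow1}(1-\beta)V^h_{\beta,\lambda}(\Delta)$ exists and is the same for every $\Delta$, and there is a function $f^h_\lambda$, obtained as a limit of the relative value functions $V^h_{\beta,\lambda}(\Delta)-V^h_{\beta,\lambda}(1)$ as $\beta\nearrow1$ (along a suitable sequence), such that for all $\Delta$ $$\bar V^h_\lambda+f^h_\lambda(\Delta)=\min_{\delta\in\{0,1\}}\big\{\bar U(\Delta,\delta)+f^h_\lambda(\Delta')\big\},$$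 where $\Delta'$ is the successor state of $(\Delta,\delta)$. Moreover, the stationary policy $\delta_k^*=\mathbb I[\Delta_k\ge\bar\eta_\lambda]$ achieves the minimum on the right-hand side of this equation and is average-cost optimal, i.e. it minimizes $\limsup_{m\to\infty}\frac1m\mathbb E\big[\sum_{k=0}^m\bar U(\Delta_k,\delta_k)\big]$ over admissible sensing policies.
   Context: Underlying game: $dx=[Ax+B_1u_1+B_2u_2]dt+G\,dW$, with $Q\succeq0$, $R_1,R_2\succ0$. $P\succeq0$ is the minimal positive-semidefinite solution of $A^\top P+PA+Q+P(B_2R_2^{-1}B_2^\top-B_1R_1^{-1}B_1^\top)P=0$ (assumed to exist). Define $\tilde A=A+B_2R_2^{-1}B_2^\top P$, $M_1=PB_1R_1^{-1}B_1^\top P$, and $\tilde G^h=\int_0^h e^{\tilde A s}GG^\top e^{\tilde A^\top s}\,ds$. A sensing policy chooses $\delta_k\in\{0,1\}$ at each discrete step $k$ (sensing at time $kh$), using past information; $\Delta_k$ is the number of steps since the last sensing. It is known (and may be used as given) that for each $\beta\in(0,1)$ the $\beta$-discounted value function satisfies the Bellman equation $V^h_{\beta,\lambda}(\Delta)=\min_\delta\{\bar U(\Delta,\delta)+\beta V^h_{\beta,\lambda}(\Delta')\}$ and that a $\beta$-optimal policy of threshold form $\delta_k=\mathbb I[\Delta_k\ge\eta_{\beta,\lambda}]$ exists. *)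

theory Defs
  imports "HOL-Analysis.Analysis"
begin

definition mpow :: "real^'n^'n \<Rightarrow> nat \<Rightarrow> real^'n^'n" where
  "mpow A k = ((\<lambda>X. X ** A) ^^ k) (mat 1)"

definition mexp :: "real^'n^'n \<Rightarrow> real^'n^'n" where
  "mexp A = (\<Sum>k. (1 / fact k) *\<^sub>R mpow A k)"

definition psd :: "real^'n^'n \<Rightarrow> bool" where
  "psd X \<longleftrightarrow> transpose X = X \<and> (\<forall>x. 0 \<le> x \<bullet> (X *v x))"

definition pd :: "real^'n^'n \<Rightarrow> bool" where
  "pd X \<longleftrightarrow> transpose X = X \<and> (\<forall>x. x \<noteq> 0 \<longrightarrow> 0 < x \<bullet> (X *v x))"

definition riccati ::
  "real^'n^'n \<Rightarrow> real^'m1^'n \<Rightarrow> real^'m2^'n \<Rightarrow> real^'n^'n \<Rightarrow>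
   real^'m1^'m1 \<Rightarrow> real^'m2^'m2 \<Rightarrow> real^'n^'n \<Rightarrow> bool" where
  "riccati A B1 B2 Q R1 R2 P \<longleftrightarrow>
     transpose A ** P + P ** A + Q
     + P ** (B2 ** matrix_inv R2 ** transpose B2 - B1 ** matrix_inv R1 ** transpose B1) ** P = 0"

definition Atil :: "real^'n^'n \<Rightarrow> real^'m2^'n \<Rightarrow> real^'m2^'m2 \<Rightarrow> real^'n^'n \<Rightarrow> real^'n^'n" where
  "Atil A B2 R2 P = A + B2 ** matrix_inv R2 ** transpose B2 ** P"

definition M1mat :: "real^'m1^'n \<Rightarrow> real^'m1^'m1 \<Rightarrow> real^'n^'n \<Rightarrow> real^'n^'n" where
  "M1mat B1 R1 P = P ** B1 ** matrix_inv R1 ** transpose B1 ** P"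

definition Gtil :: "real^'n^'n \<Rightarrow> real^'w^'n \<Rightarrow> real \<Rightarrow> real^'n^'n" where
  "Gtil At G h = integral {0..h}
     (\<lambda>s. mexp (s *\<^sub>R At) ** G ** transpose G ** mexp (s *\<^sub>R transpose At))"

definition Ucost ::
  "real^'n^'n \<Rightarrow> real^'m1^'n \<Rightarrow> real^'m2^'n \<Rightarrow> real^'m1^'m1 \<Rightarrow> real^'m2^'m2 \<Rightarrow>
   real^'w^'n \<Rightarrow> real^'n^'n \<Rightarrow> real \<Rightarrow> nat \<Rightarrow> real" where
  "Ucost A B1 B2 R1 R2 G P h \<Delta> =
     (let At = Atil A B2 R2 P in
      trace (M1mat B1 R1 P **
        (\<Sum>i<\<Delta>. mexp ((real i * h) *\<^sub>R At) ** Gtil At G h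
                  ** mexp ((real i * h) *\<^sub>R transpose At))))"

definition succ :: "nat \<Rightarrow> bool \<Rightarrow> nat" where
  "succ \<Delta> d = (if d then 1 else Suc \<Delta>)"

definition stage_cost :: "(nat \<Rightarrow> real) \<Rightarrow> real \<Rightarrow> nat \<Rightarrow> bool \<Rightarrow> real" where
  "stage_cost U lam \<Delta> d = U \<Delta> + lam * (if d then 1 else 0)"

text \<open>Age trajectory under an action sequence d (a sensing policy from a fixed
  initial state; since the dynamics of \<Delta> are deterministic every admissible
  policy induces such a sequence).\<close>
fun age :: "nat \<Rightarrow> (nat \<Rightarrow> bool) \<Rightarrow> nat \<Rightarrow> nat" where
  "age \<Delta>0 d 0 = \<Delta>0"
| "age \<Delta>0 d (Suc k) = succ (age \<Delta>0 d k) (d k)"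

definition disc_cost :: "(nat \<Rightarrow> real) \<Rightarrow> real \<Rightarrow> real \<Rightarrow> nat \<Rightarrow> (nat \<Rightarrow> bool) \<Rightarrow> ennreal" where
  "disc_cost U lam \<beta> \<Delta>0 d = (\<Sum>k. ennreal (\<beta> ^ k * stage_cost U lam (age \<Delta>0 d k) (d k)))"

definition Vdisc :: "(nat \<Rightarrow> real) \<Rightarrow> real \<Rightarrow> real \<Rightarrow> nat \<Rightarrow> real" where
  "Vdisc U lam \<beta> \<Delta>0 = enn2real (INF d. disc_cost U lam \<beta> \<Delta>0 d)"

definition avg_cost :: "(nat \<Rightarrow> real) \<Rightarrow> real \<Rightarrow> nat \<Rightarrow> (nat \<Rightarrow> bool) \<Rightarrow> ereal" where
  "avg_cost U lam \<Delta>0 d =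
     limsup (\<lambda>m. ereal ((1 / real m) * (\<Sum>k\<le>m. stage_cost U lam (age \<Delta>0 d k) (d k))))"

fun sage :: "(nat \<Rightarrow> bool) \<Rightarrow> nat \<Rightarrow> nat \<Rightarrow> nat" where
  "sage \<mu> \<Delta>0 0 = \<Delta>0"
| "sage \<mu> \<Delta>0 (Suc k) = succ (sage \<mu> \<Delta>0 k) (\<mu> (sage \<mu> \<Delta>0 k))"

definition stat_acts :: "(nat \<Rightarrow> bool) \<Rightarrow> nat \<Rightarrow> nat \<Rightarrow> bool" where
  "stat_acts \<mu> \<Delta>0 k = \<mu> (sage \<mu> \<Delta>0 k)"

definition thr :: "nat \<Rightarrow> nat \<Rightarrow> bool" where
  "thr \<eta> \<Delta> \<longleftrightarrow> \<eta> \<le> \<Delta>"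

end

theory Submission
  imports Defs
begin

lemma dot_mv: fixes A :: "real^'n^'m"
  shows "x \<bullet> (A *v y) = (transpose A *v x) \<bullet> y"
  by (simp add: inner_vec_def matrix_vector_mult_def transpose_def sum_distrib_left sum_distrib_right mult_ac sum.swap[of _ "UNIV::'n set"])

lemma pd_inv_nonneg: fixes R :: "real^'m^'m"
  assumes "pd R" shows "0 \<le> y \<bullet> (matrix_inv R *v y)"
proof -
  have "\<forall>x. R *v x = 0 \<longrightarrow> x = 0"
    using assms unfolding pd_def by (metis inner_zero_right less_irrefl)
  then have "invertible R" using matrix_left_invertible_ker invertible_left_inverse by blast
  then have RR: "R ** matrix_inv R = mat 1"
    unfolding invertible_def matrix_inv_def by (rule someI_ex[where P="\<lambda>A'. R ** A' = mat 1 \<and> A' ** R = mat 1", THEN conjunct1])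
  define z where "z = matrix_inv R *v y"
  have "R *v z = y" unfolding z_def by (simp add: matrix_vector_mul_assoc RR)
  then have "y \<bullet> z = z \<bullet> (R *v z)" by (metis inner_commute)
  also have "\<dots> \<ge> 0" using assms unfolding pd_def by (cases "z = 0") (auto simp: less_imp_le)
  finally show ?thesis unfolding z_def .
qed

lemma M1_nonneg: fixes P :: "real^'n^'n" and B1 :: "real^'m^'n"
  assumes "psd P" "pd R1" shows "0 \<le> x \<bullet> (M1mat B1 R1 P *v x)"
proof -
  have PT: "transpose P = P" using assms(1) unfolding psd_def by simp
  define y where "y = transpose B1 *v (P *v x)"
  have "M1mat B1 R1 P *v x = P *v (B1 *v (matrix_inv R1 *v y))"
    unfolding M1mat_def y_def by (simp add: matrix_vector_mul_assoc matrix_mul_assoc)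
  then have "x \<bullet> (M1mat B1 R1 P *v x) = y \<bullet> (matrix_inv R1 *v y)"
    by (simp add: dot_mv PT y_def del: transpose_matrix_vector)
  then show ?thesis using pd_inv_nonneg[OF assms(2)] by simp
qed

lemma trace_FFt: fixes M :: "real^'n^'n" and F :: "real^'k^'n"
  assumes "\<And>x. 0 \<le> x \<bullet> (M *v x)"
  shows "0 \<le> trace (M ** (F ** transpose F))"
proof -
  have "trace (M ** (F ** transpose F)) = (\<Sum>j\<in>UNIV. (\<chi> i. F$i$j) \<bullet> (M *v (\<chi> i. F$i$j)))"
    by (simp add: trace_def matrix_matrix_mult_def transpose_def inner_vec_def matrix_vector_mult_def
         sum_distrib_left sum_distrib_right mult_ac sum.swap[of _ "UNIV::'k set"])
  also have "\<dots> \<ge> 0" using assms by (simp add: sum_nonneg)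
  finally show ?thesis .
qed

lemma mpow_Suc: "mpow A (Suc k) = mpow A k ** A"
  by (simp add: mpow_def)

lemma mpow_0: "mpow A 0 = mat 1"
  by (simp add: mpow_def)

lemma mpow_comm: "mpow A k ** A = A ** mpow A k"
  by (induction k) (simp_all add: mpow_0 mpow_Suc matrix_mul_assoc[symmetric])

lemma mpow_transpose: "mpow (transpose A) k = transpose (mpow A k)"
  by (induction k) (simp_all add: mpow_0 mpow_Suc matrix_transpose_mul mpow_comm)

lemma mpow_entry_bound:
  fixes A :: "real^'n^'n"
  shows "\<bar>mpow A k $ i $ j\<bar> \<le> (\<Sum>a\<in>UNIV. \<Sum>b\<in>UNIV. \<bar>A$a$b\<bar>) ^ k"
proof (induction k arbitrary: i j)
  case 0
  then show ?case by (simp add: mpow_0 mat_def)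
next
  case (Suc k)
  define s where "s = (\<Sum>a\<in>UNIV. \<Sum>b\<in>UNIV. \<bar>A$a$b\<bar>)"
  have "\<bar>mpow A (Suc k) $ i $ j\<bar> = \<bar>\<Sum>l\<in>UNIV. mpow A k $ i $ l * A $ l $ j\<bar>"
    by (simp add: mpow_Suc matrix_matrix_mult_def)
  also have "\<dots> \<le> (\<Sum>l\<in>UNIV. \<bar>mpow A k $ i $ l\<bar> * \<bar>A $ l $ j\<bar>)"
    by (metis (no_types, lifting) abs_mult sum.cong sum_abs)
  also have "\<dots> \<le> (\<Sum>l\<in>UNIV. s^k * \<bar>A $ l $ j\<bar>)"
    by (rule sum_mono, rule mult_right_mono) (use Suc s_def in auto)
  also have "\<dots> = s^k * (\<Sum>l\<in>UNIV. \<bar>A $ l $ j\<bar>)" by (simp add: sum_distrib_left)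
  also have "(\<Sum>l\<in>UNIV. \<bar>A $ l $ j\<bar>) \<le> s" unfolding s_def
  proof -
    have "(\<Sum>l\<in>UNIV. \<bar>A $ l $ j\<bar>) \<le> (\<Sum>l\<in>UNIV. \<Sum>b\<in>UNIV. \<bar>A$l$b\<bar>)"
      by (rule sum_mono) (rule member_le_sum, auto)
    then show "(\<Sum>l\<in>UNIV. \<bar>A $ l $ j\<bar>) \<le> (\<Sum>a\<in>UNIV. \<Sum>b\<in>UNIV. \<bar>A$a$b\<bar>)" .
  qed
  then have "s^k * (\<Sum>l\<in>UNIV. \<bar>A $ l $ j\<bar>) \<le> s^k * s"
    by (rule mult_left_mono) (simp add: s_def sum_nonneg)
  finally show ?case by (simp add: s_def mult.commute)
qed

lemma norm_mat_le: fixes X :: "real^'n^'m"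
  shows "norm X \<le> (\<Sum>a\<in>UNIV. \<Sum>b\<in>UNIV. \<bar>X$a$b\<bar>)"
proof -
  have "norm X \<le> (\<Sum>a\<in>UNIV. norm (X$a))" unfolding norm_vec_def by (rule L2_set_le_sum) simp
  also have "\<dots> \<le> (\<Sum>a\<in>UNIV. \<Sum>b\<in>UNIV. \<bar>X$a$b\<bar>)"
    by (rule sum_mono) (rule norm_le_l1_cart)
  finally show ?thesis .
qed

lemma mexp_summable: fixes A :: "real^'n^'n"
  shows "summable (\<lambda>k. (1 / fact k) *\<^sub>R mpow A k)"
proof -
  define s where "s = (\<Sum>a\<in>UNIV. \<Sum>b\<in>UNIV. \<bar>A$a$b\<bar>)"
  define C where "C = real (CARD('n) * CARD('n))"
  have b: "norm ((1 / fact k) *\<^sub>R mpow A k) \<le> C * (inverse (fact k) * s^k)" for k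
  proof -
    have "norm ((1 / fact k) *\<^sub>R mpow A k) = (1 / fact k) * norm (mpow A k)" by simp
    also have "norm (mpow A k) \<le> (\<Sum>a\<in>UNIV. \<Sum>b\<in>UNIV. \<bar>mpow A k$a$b\<bar>)" by (rule norm_mat_le)
    also have "\<dots> \<le> (\<Sum>a\<in>(UNIV::'n set). \<Sum>b\<in>(UNIV::'n set). s^k)"
      by (intro sum_mono) (simp add: s_def mpow_entry_bound)
    also have "\<dots> = C * s^k" by (simp add: C_def)
    finally show ?thesis by (simp add: divide_inverse mult_left_mono mult_ac)
  qed
  have sg: "summable (\<lambda>k. C * (inverse (fact k) * s^k))"
    by (rule summable_mult) (rule summable_exp)
  show ?thesis by (rule summable_comparison_test'[OF sg b])
qed

lemma bl_transpose: "bounded_linear (transpose :: real^'n^'m \<Rightarrow> real^'m^'n)"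
proof -
  have "linear (transpose :: real^'n^'m \<Rightarrow> real^'m^'n)"
    by (rule linearI) (simp_all add: transpose_def vec_eq_iff)
  then show ?thesis by (simp add: linear_conv_bounded_linear)
qed

lemma mexp_transpose: fixes A :: "real^'n^'n"
  shows "mexp (transpose A) = transpose (mexp A)"
  unfolding mexp_def
  by (simp add: bounded_linear.suminf[OF bl_transpose mexp_summable] transpose_scalar mpow_transpose)

lemma trace_mul_zero: "trace ((M::real^'n^'n) ** 0) = 0"
  by (simp add: trace_def matrix_matrix_mult_def)

lemma trace_mul_sum: fixes M :: "real^'n^'n"
  shows "trace (M ** (\<Sum>i\<in>S. Y i)) = (\<Sum>i\<in>S. trace (M ** Y i))"
proof (induction S rule: infinite_finite_induct)
  case (insert x F)
  then show ?case by (simp add: matrix_add_ldistrib trace_add)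
qed (simp_all add: trace_mul_zero trace_def)

lemma bl_trace_sandwich: fixes M E :: "real^'n^'n"
  shows "bounded_linear (\<lambda>X. trace (M ** (E ** X ** transpose E)))"
proof -
  have "linear (\<lambda>X::real^'n^'n. trace (M ** (E ** X ** transpose E)))"
    by (rule linearI) (simp_all add: trace_def matrix_matrix_mult_def sum_distrib_left sum_distrib_right
        algebra_simps sum.distrib scaleR_sum_right)
  then show ?thesis by (simp add: linear_conv_bounded_linear)
qed

lemma U_nonneg:
  fixes P :: "real^'n^'n" and B1 :: "real^'m1^'n" and B2 :: "real^'m2^'n"
    and R1 :: "real^'m1^'m1" and R2 :: "real^'m2^'m2" and G :: "real^'w^'n"
  assumes "psd P" "pd R1"
  shows "0 \<le> Ucost A B1 B2 R1 R2 G P h D"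
proof -
  define At where "At = Atil A B2 R2 P"
  define M where "M = M1mat B1 R1 P"
  define E where "E = (\<lambda>i::nat. mexp ((real i * h) *\<^sub>R At))"
  define K where "K = (\<lambda>s. mexp (s *\<^sub>R At) ** G ** transpose G ** mexp (s *\<^sub>R transpose At))"
  define T where "T = (\<lambda>X. \<Sum>i<D. trace (M ** (E i ** X ** transpose (E i))))"
  have Mq: "\<And>x. 0 \<le> x \<bullet> (M *v x)" unfolding M_def by (rule M1_nonneg[OF assms])
  have ET: "mexp ((real i * h) *\<^sub>R transpose At) = transpose (E i)" for i
    by (simp add: E_def transpose_scalar[symmetric] mexp_transpose)
  have KT: "K s = (mexp (s *\<^sub>R At) ** G) ** transpose (mexp (s *\<^sub>R At) ** G)" for s
    by (simp add: K_def transpose_scalar[symmetric] mexp_transpose matrix_transpose_mul matrix_mul_assoc)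
  have U_eq: "Ucost A B1 B2 R1 R2 G P h D = T (Gtil At G h)"
    unfolding Ucost_def T_def Let_def At_def[symmetric] M_def[symmetric]
    by (simp add: ET E_def trace_mul_sum)
  have blT: "bounded_linear T" unfolding T_def
    by (rule bounded_linear_sum) (rule bl_trace_sandwich)
  have Tpos: "0 \<le> T (K s)" for s
  proof -
    have "0 \<le> trace (M ** (E i ** K s ** transpose (E i)))" for i
    proof -
      have "E i ** K s ** transpose (E i) = (E i ** (mexp (s *\<^sub>R At) ** G)) ** transpose (E i ** (mexp (s *\<^sub>R At) ** G))"
        by (simp add: KT matrix_transpose_mul matrix_mul_assoc)
      then show ?thesis using trace_FFt[OF Mq] by simp
    qed
    then show ?thesis unfolding T_def by (simp add: sum_nonneg)
  qed
  show ?thesis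
  proof (cases "K integrable_on {0..h}")
    case True
    have "T (Gtil At G h) = integral {0..h} (T \<circ> K)"
      unfolding Gtil_def K_def[symmetric] by (rule integral_linear[OF True blT, symmetric])
    also have "\<dots> \<ge> 0"
      by (rule integral_nonneg) (use integrable_linear[OF True blT] Tpos in auto)
    finally show ?thesis using U_eq by simp
  next
    case False
    then have "Gtil At G h = 0" unfolding Gtil_def K_def[symmetric] by (rule not_integrable_integral)
    then show ?thesis using U_eq by (simp add: T_def trace_def matrix_matrix_mult_def)
  qed
qed

definition Jthr :: "(nat \<Rightarrow> real) \<Rightarrow> real \<Rightarrow> nat \<Rightarrow> real \<Rightarrow> nat \<Rightarrow> real" where
  "Jthr U lam \<eta> b \<Delta> = (\<Sum>k. b^k * stage_cost U lam (sage (thr \<eta>) \<Delta> k) (thr \<eta> (sage (thr \<eta>) \<Delta> k)))"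

lemma age_stat: "age \<Delta> (stat_acts \<mu> \<Delta>) k = sage \<mu> \<Delta> k"
  by (induction k) (simp_all add: stat_acts_def)

lemma sage_shift: "sage \<mu> \<Delta> (Suc k) = sage \<mu> (succ \<Delta> (\<mu> \<Delta>)) k"
  by (induction k) simp_all

lemma succ_ge1: "1 \<le> succ a d" by (simp add: succ_def)

lemma sage_bound: "sage (thr \<eta>) \<Delta> k \<le> max \<Delta> (max \<eta> 1)"
  by (induction k) (auto simp: succ_def thr_def)

lemma sage_cycle: "sage (thr \<eta>) 1 k = k mod (max \<eta> 1) + 1"
proof (induction k)
  case 0 then show ?case by simp
next
  case (Suc k)
  define L where "L = max \<eta> 1"
  have L1: "1 \<le> L" unfolding L_def by simp
  have lt: "k mod L < L" using L1 by simp
  show ?case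
  proof (cases "\<eta> \<le> k mod L + 1")
    case True
    have "k mod L + 1 = L"
    proof (cases "\<eta> = 0")
      case True then show ?thesis using L_def by simp
    next
      case False then have "L = \<eta>" using L_def by simp
      then show ?thesis using lt \<open>\<eta> \<le> k mod L + 1\<close> by linarith
    qed
    then have "Suc k mod L = 0" using \<open>k mod L + 1 = L\<close> by (simp add: mod_Suc)
    then show ?thesis using Suc True by (simp add: succ_def thr_def L_def)
  next
    case False
    then have "k mod L + 1 < L" unfolding L_def by simp
    then have "Suc k mod L = k mod L + 1" by (simp add: mod_Suc)
    then show ?thesis using Suc False by (simp add: succ_def thr_def L_def)
  qed
qed

context
  fixes U :: "nat \<Rightarrow> real" and lam :: real
  assumes U0: "\<And>a. 0 \<le> U a" and lam0: "0 \<le> lam"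
begin

lemma sc_nonneg: "0 \<le> stage_cost U lam a d"
  using U0[of a] lam0 by (simp add: stage_cost_def)

lemma sc_bound: "a \<le> M \<Longrightarrow> stage_cost U lam a d \<le> (\<Sum>i\<le>M. U i) + lam"
proof -
  assume "a \<le> M"
  then have "U a \<le> (\<Sum>i\<le>M. U i)" by (intro member_le_sum) (auto simp: U0)
  then show ?thesis using lam0 by (simp add: stage_cost_def)
qed

lemma Jthr_summable:
  assumes "0 \<le> b" "b < 1"
  shows "summable (\<lambda>k. b^k * stage_cost U lam (sage (thr \<eta>) \<Delta> k) (thr \<eta> (sage (thr \<eta>) \<Delta> k)))"
proof -
  define B where "B = (\<Sum>i\<le>max \<Delta> (max \<eta> 1). U i) + lam"
  have "norm (b^k * stage_cost U lam (sage (thr \<eta>) \<Delta> k) (thr \<eta> (sage (thr \<eta>) \<Delta> k))) \<le> B * b^k" for k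
  proof -
    have "stage_cost U lam (sage (thr \<eta>) \<Delta> k) (thr \<eta> (sage (thr \<eta>) \<Delta> k)) \<le> B"
      unfolding B_def by (rule sc_bound[OF sage_bound])
    then have "b^k * stage_cost U lam (sage (thr \<eta>) \<Delta> k) (thr \<eta> (sage (thr \<eta>) \<Delta> k)) \<le> b^k * B"
      using assms by (intro mult_left_mono) auto
    then show ?thesis using assms sc_nonneg by (simp add: abs_mult mult.commute)
  qed
  moreover have "summable (\<lambda>k. B * b^k)" using assms by (intro summable_mult summable_geometric) simp
  ultimately show ?thesis by (rule summable_comparison_test'[where N=0, rotated]) 
qed

lemma Jthr_nonneg: "0 \<le> b \<Longrightarrow> b < 1 \<Longrightarrow> 0 \<le> Jthr U lam \<eta> b \<Delta>"
  unfolding Jthr_def by (intro suminf_nonneg Jthr_summable) (auto intro: mult_nonneg_nonneg sc_nonneg)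

lemma disc_thr:
  assumes "0 \<le> b" "b < 1"
  shows "disc_cost U lam b \<Delta> (stat_acts (thr \<eta>) \<Delta>) = ennreal (Jthr U lam \<eta> b \<Delta>)"
  unfolding disc_cost_def Jthr_def age_stat stat_acts_def
  by (rule suminf_ennreal2) (use assms Jthr_summable sc_nonneg in \<open>auto simp: stat_acts_def\<close>)

lemma Jthr_step:
  assumes "0 \<le> b" "b < 1"
  shows "Jthr U lam \<eta> b \<Delta> = stage_cost U lam \<Delta> (thr \<eta> \<Delta>) + b * Jthr U lam \<eta> b (succ \<Delta> (thr \<eta> \<Delta>))"
proof -
  define f where "f = (\<lambda>k. b^k * stage_cost U lam (sage (thr \<eta>) \<Delta> k) (thr \<eta> (sage (thr \<eta>) \<Delta> k)))"
  have sf: "summable f" unfolding f_def by (rule Jthr_summable[OF assms])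
  have "(\<Sum>n. f (Suc n)) = suminf f - f 0" by (rule suminf_split_head[OF sf])
  moreover have "(\<lambda>n. f (Suc n)) = (\<lambda>n. b * (b^n * stage_cost U lam (sage (thr \<eta>) (succ \<Delta> (thr \<eta> \<Delta>)) n) (thr \<eta> (sage (thr \<eta>) (succ \<Delta> (thr \<eta> \<Delta>)) n))))"
    unfolding f_def by (simp only: sage_shift power_Suc mult_ac)
  moreover have "(\<Sum>n. b * (b^n * stage_cost U lam (sage (thr \<eta>) (succ \<Delta> (thr \<eta> \<Delta>)) n) (thr \<eta> (sage (thr \<eta>) (succ \<Delta> (thr \<eta> \<Delta>)) n))))
      = b * Jthr U lam \<eta> b (succ \<Delta> (thr \<eta> \<Delta>))"
    unfolding Jthr_def by (rule suminf_mult[OF Jthr_summable[OF assms]])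
  ultimately show ?thesis unfolding Jthr_def f_def[symmetric] by (simp add: f_def)
qed

lemma Jthr_cycle:
  assumes "0 \<le> b" "b < 1"
  shows "(1 - b ^ max \<eta> 1) * Jthr U lam \<eta> b 1 = (\<Sum>k<max \<eta> 1. b^k * U (Suc k)) + b ^ (max \<eta> 1 - 1) * lam"
proof -
  define L where "L = max \<eta> 1"
  define f where "f = (\<lambda>k. b^k * stage_cost U lam (sage (thr \<eta>) 1 k) (thr \<eta> (sage (thr \<eta>) 1 k)))"
  have sf: "summable f" unfolding f_def by (rule Jthr_summable[OF assms])
  have fk: "f k = b^k * stage_cost U lam (k mod L + 1) (\<eta> \<le> k mod L + 1)" for k
    unfolding f_def sage_cycle L_def thr_def by simp
  have "f (n + L) = b^L * f n" for n
    unfolding fk by (simp add: power_add mult_ac)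
  then have "(\<Sum>n. f (n + L)) = b^L * suminf f" using suminf_mult[OF sf] by simp
  then have "suminf f = b^L * suminf f + (\<Sum>i<L. f i)" using suminf_split_initial_segment[OF sf, of L] by simp
  then have eq: "(1 - b^L) * suminf f = (\<Sum>i<L. f i)" by (simp add: algebra_simps)
  have "L \<noteq> 0" using L_def by simp
  then obtain m where m: "L = Suc m" using not0_implies_Suc by blast
  have "(\<Sum>i<L. f i) = (\<Sum>i<m. b^i * U (Suc i)) + b^m * (U (Suc m) + lam)"
  proof -
    have "f i = b^i * U (Suc i)" if "i < m" for i
    proof -
      have "i mod L = i" using that m by simp
      moreover have "\<not> \<eta> \<le> i + 1" using that m L_def by auto
      ultimately show ?thesis by (simp add: fk stage_cost_def)
    qed
    moreover have "f m = b^m * (U (Suc m) + lam)"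
    proof -
      have "m mod L = m" using m by simp
      moreover have "\<eta> \<le> m + 1" using m L_def by auto
      ultimately show ?thesis by (simp add: fk stage_cost_def)
    qed
    ultimately show ?thesis using m by simp
  qed
  also have "\<dots> = (\<Sum>k<L. b^k * U (Suc k)) + b ^ (L - 1) * lam"
    using m by (simp add: algebra_simps)
  finally show ?thesis using eq unfolding Jthr_def f_def[symmetric] L_def by simp
qed

end

definition wpot :: "(nat \<Rightarrow> real) \<Rightarrow> real \<Rightarrow> nat \<Rightarrow> real" where
  "wpot U g a = (\<Sum>k<a-1. (U (Suc k) - g))"

lemma wpot_Suc: "1 \<le> a \<Longrightarrow> wpot U g (Suc a) = wpot U g a + U a - g"
proof -
  assume "1 \<le> a"
  then obtain m where m: "a = Suc m" using not0_implies_Suc by fastforce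
  then show ?thesis by (simp add: wpot_def)
qed

lemma wpot_1: "wpot U g 1 = 0" by (simp add: wpot_def)
lemma wpot_Suc0: "wpot U g (Suc 0) = 0" by (simp add: wpot_def)

lemma age_ge1: "1 \<le> \<Delta>0 \<Longrightarrow> 1 \<le> age \<Delta>0 d k"
  by (cases k) (simp_all add: succ_def)

context
  fixes U :: "nat \<Rightarrow> real" and lam g :: real
  assumes U0: "\<And>a. 0 \<le> U a" and lam0: "0 \<le> lam"
    and star: "\<And>l. 0 \<le> (\<Sum>k<l. (U (Suc k) - g)) + lam"
begin

lemma wpot_lam: "0 \<le> wpot U g a + lam"
  unfolding wpot_def by (rule star)

lemma trans_ineq: "1 \<le> a \<Longrightarrow> g + wpot U g (succ a dd) - wpot U g a \<le> stage_cost U lam a dd"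
proof -
  assume a: "1 \<le> a"
  show ?thesis
  proof (cases dd)
    case True
    have "0 \<le> wpot U g (Suc a) + lam" by (rule wpot_lam)
    then show ?thesis using True a by (simp add: succ_def wpot_1 wpot_Suc0 wpot_Suc stage_cost_def)
  next
    case False
    then show ?thesis using a by (simp add: succ_def wpot_Suc stage_cost_def)
  qed
qed

lemma pot_sum:
  assumes "1 \<le> \<Delta>0" "0 \<le> b" "b \<le> 1"
  shows "g * (\<Sum>k<N. b^k) + b^N * (wpot U g (age \<Delta>0 d N) + lam) - wpot U g \<Delta>0 - lam
         \<le> (\<Sum>k<N. b^k * stage_cost U lam (age \<Delta>0 d k) (d k))"
proof (induction N)
  case 0 then show ?case by simp
next
  case (Suc N)
  define a where "a = age \<Delta>0 d N"
  define a' where "a' = age \<Delta>0 d (Suc N)"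
  have a1: "1 \<le> a" unfolding a_def by (rule age_ge1[OF assms(1)])
  have a': "a' = succ a (d N)" unfolding a'_def a_def by simp
  have ti: "b^N * (g + wpot U g a' - wpot U g a) \<le> b^N * stage_cost U lam a (d N)"
    using trans_ineq[OF a1, of "d N"] a' assms by (intro mult_left_mono) auto
  have "b^(Suc N) * (wpot U g a' + lam) \<le> b^N * (wpot U g a' + lam)"
    using wpot_lam[of a'] assms by (intro mult_right_mono) (auto simp: mult_left_le_one_le)
  then show ?case using Suc ti unfolding a_def a'_def
    by (simp add: algebra_simps)
qed

end

theorem theorem1:
  fixes A Q P :: "real^'n^'n" and B1 :: "real^'m1^'n" and B2 :: "real^'m2^'n"
    and R1 :: "real^'m1^'m1" and R2 :: "real^'m2^'m2" and G :: "real^'w^'n"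
    and h lam :: real and U :: "nat \<Rightarrow> real"
    and \<beta> :: "nat \<Rightarrow> real" and \<eta> :: "nat \<Rightarrow> nat" and r :: "nat \<Rightarrow> nat" and \<eta>bar :: nat
  assumes h: "h > 0" and lam: "lam \<ge> 0"
    and Q: "psd Q" and R1: "pd R1" and R2: "pd R2"
    and P_ric: "psd P \<and> riccati A B1 B2 Q R1 R2 P"
    and P_min: "\<forall>P'. psd P' \<and> riccati A B1 B2 Q R1 R2 P' \<longrightarrow> psd (P' - P)"
    and U_def: "U = Ucost A B1 B2 R1 R2 G P h"
    and bellman: "\<forall>b. 0 < b \<and> b < 1 \<longrightarrow> (\<forall>\<Delta>\<ge>1.
        Vdisc U lam b \<Delta> = min (stage_cost U lam \<Delta> False + b * Vdisc U lam b (succ \<Delta> False))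
                                (stage_cost U lam \<Delta> True + b * Vdisc U lam b (succ \<Delta> True)))"
    and \<beta>_range: "\<forall>l. 0 < \<beta> l \<and> \<beta> l < 1"
    and \<beta>_mono: "incseq \<beta>" and \<beta>_lim: "\<beta> \<longlonglongrightarrow> 1"
    and \<eta>_opt: "\<forall>l. \<forall>\<Delta>\<ge>1. disc_cost U lam (\<beta> l) \<Delta> (stat_acts (thr (\<eta> l)) \<Delta>)
                             = (INF d. disc_cost U lam (\<beta> l) \<Delta> d)"
    and r: "strict_mono r" and \<eta>bar: "(\<lambda>p. \<eta> (r p)) \<longlonglongrightarrow> \<eta>bar"
  shows "\<exists>Vbar :: real. \<exists>f :: nat \<Rightarrow> real.
     (\<forall>\<Delta>\<ge>1. ((\<lambda>b. (1 - b) * Vdisc U lam b \<Delta>) \<longlongrightarrow> Vbar) (at_left 1))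
   \<and> (\<exists>\<gamma> :: nat \<Rightarrow> real. (\<forall>j. 0 < \<gamma> j \<and> \<gamma> j < 1) \<and> \<gamma> \<longlonglongrightarrow> 1 \<and>
        (\<forall>\<Delta>\<ge>1. (\<lambda>j. Vdisc U lam (\<gamma> j) \<Delta> - Vdisc U lam (\<gamma> j) 1) \<longlonglongrightarrow> f \<Delta>))
   \<and> (\<forall>\<Delta>\<ge>1. Vbar + f \<Delta> = min (stage_cost U lam \<Delta> False + f (succ \<Delta> False))
                               (stage_cost U lam \<Delta> True + f (succ \<Delta> True)))
   \<and> (\<forall>\<Delta>\<ge>1. stage_cost U lam \<Delta> (thr \<eta>bar \<Delta>) + f (succ \<Delta> (thr \<eta>bar \<Delta>))
              = min (stage_cost U lam \<Delta> False + f (succ \<Delta> False))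
                    (stage_cost U lam \<Delta> True + f (succ \<Delta> True)))
   \<and> (\<forall>\<Delta>\<ge>1. \<forall>d. avg_cost U lam \<Delta> (stat_acts (thr \<eta>bar) \<Delta>) \<le> avg_cost U lam \<Delta> d)"
proof -
  have U0: "\<And>a. 0 \<le> U a" unfolding U_def using P_ric R1 by (intro U_nonneg) auto
  note lam0 = lam
  have "eventually (\<lambda>p. \<eta> (r p) = \<eta>bar) sequentially"
    using \<eta>bar by (simp add: tendsto_discrete)
  then obtain p0 where p0: "\<And>p. p \<ge> p0 \<Longrightarrow> \<eta> (r p) = \<eta>bar"
    unfolding eventually_sequentially by blast
  define \<gamma> where "\<gamma> = (\<lambda>j. \<beta> (r (j + p0)))"
  have \<gamma>01: "\<And>j. 0 < \<gamma> j \<and> \<gamma> j < 1" unfolding \<gamma>_def using \<beta>_range by simp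
  have smj: "strict_mono (\<lambda>j. r (j + p0))"
    using r unfolding strict_mono_def by simp
  have \<gamma>lim: "\<gamma> \<longlonglongrightarrow> 1"
    using LIMSEQ_subseq_LIMSEQ[OF \<beta>_lim smj] unfolding \<gamma>_def o_def .
  have \<gamma>fl: "filterlim \<gamma> (at_left 1) sequentially"
  proof -
    have "\<forall>j. \<gamma> j \<in> {..<1} \<and> \<gamma> j \<noteq> 1" using \<gamma>01 by (simp add: less_imp_neq)
    then show ?thesis unfolding filterlim_at using \<gamma>lim by (simp add: always_eventually)
  qed
  have opt: "\<And>j \<Delta>. 1 \<le> \<Delta> \<Longrightarrow> disc_cost U lam (\<gamma> j) \<Delta> (stat_acts (thr \<eta>bar) \<Delta>) = (INF d. disc_cost U lam (\<gamma> j) \<Delta> d)"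
  proof -
    fix j \<Delta> assume \<Delta>: "1 \<le> (\<Delta>::nat)"
    have "\<eta> (r (j + p0)) = \<eta>bar" by (rule p0) simp
    then show "disc_cost U lam (\<gamma> j) \<Delta> (stat_acts (thr \<eta>bar) \<Delta>) = (INF d. disc_cost U lam (\<gamma> j) \<Delta> d)"
      using \<eta>_opt \<Delta> unfolding \<gamma>_def by metis
  qed
  define L where "L = max \<eta>bar 1"
  have L1: "1 \<le> L" unfolding L_def by simp
  define Nf where "Nf = (\<lambda>l (b::real). (\<Sum>k<l. b^k * U (Suc k)) + b^(l-1) * lam)"
  define Df where "Df = (\<lambda>l (b::real). (\<Sum>k<l. b^k))"
  define g where "g = Nf L 1 / real L"
  define J where "J = Jthr U lam \<eta>bar"
  have Dpos: "\<And>l b. 1 \<le> l \<Longrightarrow> 0 \<le> b \<Longrightarrow> 1 \<le> Df l b"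
  proof -
    fix l :: nat and b :: real assume "1 \<le> l" "0 \<le> b"
    then have "b^0 \<le> (\<Sum>k<l. b^k)" by (intro member_le_sum) auto
    then show "1 \<le> Df l b" unfolding Df_def by simp
  qed
  have D1: "\<And>l. Df l 1 = real l" unfolding Df_def by simp
  have cyc: "\<And>e b. 0 < b \<Longrightarrow> b < 1 \<Longrightarrow> (1 - b) * Jthr U lam e b 1 = Nf (max e 1) b / Df (max e 1) b"
  proof -
    fix e :: nat and b :: real assume b: "0 < b" "b < 1"
    have c1: "(1 - b ^ max e 1) * Jthr U lam e b 1 = Nf (max e 1) b"
      unfolding Nf_def by (rule Jthr_cycle[OF U0 lam0]) (use b in auto)
    have c2: "1 - b ^ max e 1 = (1 - b) * Df (max e 1) b"
      unfolding Df_def by (rule one_diff_power_eq)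
    have "1 \<le> Df (max e 1) b" using Dpos b by simp
    then have nz: "Df (max e 1) b \<noteq> 0" by linarith
    have "Df (max e 1) b * ((1 - b) * Jthr U lam e b 1) = Nf (max e 1) b"
      using c1 unfolding c2 by (simp only: mult_ac)
    then show "(1 - b) * Jthr U lam e b 1 = Nf (max e 1) b / Df (max e 1) b"
      using nz by (simp add: eq_divide_eq mult.commute)
  qed
  have Jnn: "\<And>b \<Delta>. 0 < b \<Longrightarrow> b < 1 \<Longrightarrow> 0 \<le> J b \<Delta>"
    unfolding J_def by (rule Jthr_nonneg[OF U0 lam0]) auto
  have Vg: "\<And>j \<Delta>. 1 \<le> \<Delta> \<Longrightarrow> Vdisc U lam (\<gamma> j) \<Delta> = J (\<gamma> j) \<Delta>"
  proof -
    fix j \<Delta> assume \<Delta>: "1 \<le> (\<Delta>::nat)"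
    have "(INF d. disc_cost U lam (\<gamma> j) \<Delta> d) = ennreal (J (\<gamma> j) \<Delta>)"
      using opt[OF \<Delta>, of j] disc_thr[OF U0 lam0, of "\<gamma> j"] \<gamma>01[of j] unfolding J_def by simp
    then show "Vdisc U lam (\<gamma> j) \<Delta> = J (\<gamma> j) \<Delta>" unfolding Vdisc_def using Jnn \<gamma>01 by simp
  qed
  have NDlim: "((\<lambda>j. Nf l (x j) / Df l (x j)) \<longlongrightarrow> Nf l 1 / real l) F"
    if "(x \<longlongrightarrow> 1) F" "1 \<le> l" for l :: nat and x :: "'z \<Rightarrow> real" and F
  proof -
    have "((\<lambda>j. Nf l (x j) / Df l (x j)) \<longlongrightarrow> Nf l 1 / Df l 1) F"
      unfolding Nf_def Df_def using that
      by (intro tendsto_intros) auto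
    then show ?thesis using D1 by simp
  qed
  have cycJ: "\<And>b. 0 < b \<Longrightarrow> b < 1 \<Longrightarrow> (1 - b) * J b 1 = Nf L b / Df L b"
    unfolding J_def L_def by (rule cyc)
  have star: "0 \<le> (\<Sum>k<l. (U (Suc k) - g)) + lam" for l
  proof (cases "l = 0")
    case True then show ?thesis using lam0 by simp
  next
    case False
    then have l1: "1 \<le> l" by simp
    have le: "Nf L (\<gamma> j) / Df L (\<gamma> j) \<le> Nf l (\<gamma> j) / Df l (\<gamma> j)" for j
    proof -
      have "disc_cost U lam (\<gamma> j) 1 (stat_acts (thr \<eta>bar) 1) \<le> disc_cost U lam (\<gamma> j) 1 (stat_acts (thr l) 1)"
        unfolding opt[OF order_refl] by (rule INF_lower) simp
      then have "J (\<gamma> j) 1 \<le> Jthr U lam l (\<gamma> j) 1"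
        unfolding J_def using \<gamma>01[of j] disc_thr[OF U0 lam0] Jthr_nonneg[OF U0 lam0] by simp
      then have "(1 - \<gamma> j) * J (\<gamma> j) 1 \<le> (1 - \<gamma> j) * Jthr U lam l (\<gamma> j) 1"
        using \<gamma>01[of j] by (intro mult_left_mono) auto
      moreover have "(1 - \<gamma> j) * J (\<gamma> j) 1 = Nf L (\<gamma> j) / Df L (\<gamma> j)"
        using cycJ[of "\<gamma> j"] \<gamma>01[of j] by simp
      moreover have "(1 - \<gamma> j) * Jthr U lam l (\<gamma> j) 1 = Nf l (\<gamma> j) / Df l (\<gamma> j)"
        using cyc[of "\<gamma> j" l] \<gamma>01[of j] l1 by (simp add: max_absorb1)
      ultimately show ?thesis by linarith
    qed
    have "Nf L 1 / real L \<le> Nf l 1 / real l"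
      by (rule LIMSEQ_le[OF NDlim[OF \<gamma>lim L1] NDlim[OF \<gamma>lim l1]]) (use le in auto)
    then have "g * real l \<le> Nf l 1" unfolding g_def using l1 by (simp add: field_simps)
    then show ?thesis unfolding Nf_def by (simp add: sum_subtractf mult.commute)
  qed
  define w where "w = wpot U g"
  have Ifin: "(INF d. disc_cost U lam b \<Delta> d) \<le> ennreal (J b \<Delta>)" if "0 < b" "b < 1" for b \<Delta>
    unfolding J_def using that disc_thr[OF U0 lam0, where b=b and \<Delta>=\<Delta> and \<eta>=\<eta>bar]
    by (intro INF_lower2[of "stat_acts (thr \<eta>bar) \<Delta>"]) auto
  have Vup: "Vdisc U lam b \<Delta> \<le> J b \<Delta>" if "0 < b" "b < 1" for b \<Delta>
  proof -
    have "enn2real (INF d. disc_cost U lam b \<Delta> d) \<le> enn2real (ennreal (J b \<Delta>))"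
      by (rule enn2real_mono[OF Ifin[OF that]]) simp
    then show ?thesis unfolding Vdisc_def using Jnn[OF that] by simp
  qed
  have Vlow: "g / (1 - b) - w \<Delta> - lam \<le> Vdisc U lam b \<Delta>" if b: "0 < b" "b < 1" and \<Delta>: "1 \<le> \<Delta>" for b \<Delta>
  proof -
    define I where "I = (INF d. disc_cost U lam b \<Delta> d)"
    have Itop: "I < top" unfolding I_def using Ifin[OF b, of \<Delta>]
      by (metis ennreal_less_top le_less_trans)
    have N: "g * Df N b - w \<Delta> - lam \<le> enn2real I" for N
    proof -
      have "ennreal (g * Df N b - w \<Delta> - lam) \<le> I"
        unfolding I_def
      proof (rule INF_greatest)
        fix d
        have "g * Df N b + b^N * (w (age \<Delta> d N) + lam) - w \<Delta> - lam
              \<le> (\<Sum>k<N. b^k * stage_cost U lam (age \<Delta> d k) (d k))"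
          unfolding Df_def w_def by (rule pot_sum[OF U0 lam0 star \<Delta>]) (use b in auto)
        moreover have "0 \<le> b^N * (w (age \<Delta> d N) + lam)"
          unfolding w_def using b wpot_lam[OF U0 lam0 star] by simp
        ultimately have "g * Df N b - w \<Delta> - lam \<le> (\<Sum>k<N. b^k * stage_cost U lam (age \<Delta> d k) (d k))"
          by linarith
        then have "ennreal (g * Df N b - w \<Delta> - lam) \<le> ennreal (\<Sum>k<N. b^k * stage_cost U lam (age \<Delta> d k) (d k))"
          by (rule ennreal_leI)
        also have "\<dots> = (\<Sum>k<N. ennreal (b^k * stage_cost U lam (age \<Delta> d k) (d k)))"
          using b sc_nonneg[OF U0 lam0] by (subst sum_ennreal) auto
        also have "\<dots> \<le> disc_cost U lam b \<Delta> d"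
          unfolding disc_cost_def by (rule sum_le_suminf[OF summableI]) auto
        finally show "ennreal (g * Df N b - w \<Delta> - lam) \<le> disc_cost U lam b \<Delta> d" .
      qed
      then show ?thesis
      proof (cases "0 \<le> g * Df N b - w \<Delta> - lam")
        case True
        then show ?thesis using enn2real_mono[OF \<open>ennreal _ \<le> I\<close> Itop] by simp
      next
        case False
        then show ?thesis using enn2real_nonneg[of I] by linarith
      qed
    qed
    have "(\<lambda>N. Df N b) \<longlonglongrightarrow> 1 / (1 - b)"
      unfolding Df_def using geometric_sums[of b] b by (simp add: sums_def)
    then have "(\<lambda>N. g * Df N b - w \<Delta> - lam) \<longlonglongrightarrow> g * (1 / (1 - b)) - w \<Delta> - lam"
      by (intro tendsto_intros)
    then have "g * (1 / (1 - b)) - w \<Delta> - lam \<le> enn2real I"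
      by (rule LIMSEQ_le_const2) (use N in auto)
    then show ?thesis unfolding Vdisc_def I_def by simp
  qed
  have ev01: "eventually (\<lambda>b. 0 < b \<and> b < 1) (at_left (1::real))"
    using eventually_at_left_real[of 0 "1::real"] by (simp add: eventually_mono)
  have id1: "((\<lambda>b::real. b) \<longlongrightarrow> 1) (at_left 1)" by (rule tendsto_ident_at)
  have J1lim: "((\<lambda>b. (1 - b) * J b 1) \<longlongrightarrow> g) (at_left 1)"
  proof -
    have "((\<lambda>b. Nf L b / Df L b) \<longlongrightarrow> g) (at_left 1)"
      unfolding g_def using NDlim[OF id1 L1] .
    moreover have "eventually (\<lambda>b. Nf L b / Df L b = (1 - b) * J b 1) (at_left 1)"
      using ev01
    proof (rule eventually_mono)
      fix b :: real assume "0 < b \<and> b < 1"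
      then show "Nf L b / Df L b = (1 - b) * J b 1" using cycJ[of b] by simp
    qed
    ultimately show ?thesis by (rule Lim_transform_eventually)
  qed
  have thrL: "thr \<eta>bar a \<longleftrightarrow> L \<le> a" if "1 \<le> a" for a
    using that unfolding thr_def L_def by auto
  have rel: "\<exists>F. ((\<lambda>b. J b \<Delta> - J b 1) \<longlongrightarrow> F) (at_left 1)" if \<Delta>: "1 \<le> \<Delta>" for \<Delta>
  proof -
    have big: "\<exists>F. ((\<lambda>b. J b a - J b 1) \<longlongrightarrow> F) (at_left 1)" if a: "L \<le> a" for a
    proof -
      have a1: "1 \<le> a" using a L1 by simp
      have "((\<lambda>b. stage_cost U lam a True - (1 - b) * J b 1) \<longlongrightarrow> stage_cost U lam a True - g) (at_left 1)"
        by (intro tendsto_intros J1lim)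
      moreover have "eventually (\<lambda>b. stage_cost U lam a True - (1 - b) * J b 1 = J b a - J b 1) (at_left 1)"
        using ev01
      proof (rule eventually_mono)
        fix b :: real assume b: "0 < b \<and> b < 1"
        have "J b a = stage_cost U lam a True + b * J b 1"
          using Jthr_step[OF U0 lam0, where b=b and \<Delta>=a and \<eta>=\<eta>bar] b thrL[OF a1] a
          unfolding J_def by (simp add: succ_def)
        then show "stage_cost U lam a True - (1 - b) * J b 1 = J b a - J b 1"
          by (simp add: algebra_simps)
      qed
      ultimately show ?thesis by (blast intro: Lim_transform_eventually)
    qed
    show ?thesis
    proof (cases "L \<le> \<Delta>")
      case True then show ?thesis by (rule big)
    next
      case False
      then have "\<Delta> \<le> L" by simp
      then show ?thesis
      proof (induction rule: inc_induct)
        case base then show ?case by (rule big) simp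
      next
        case (step n)
        have n1: "1 \<le> n" using step.hyps(1) \<Delta> by simp
        obtain F where F: "((\<lambda>b. J b (Suc n) - J b 1) \<longlongrightarrow> F) (at_left 1)" using step.IH by blast
        have "((\<lambda>b. stage_cost U lam n False + b * (J b (Suc n) - J b 1) - (1 - b) * J b 1)
               \<longlongrightarrow> stage_cost U lam n False + 1 * F - g) (at_left 1)"
          by (intro tendsto_intros J1lim F id1)
        moreover have "eventually (\<lambda>b. stage_cost U lam n False + b * (J b (Suc n) - J b 1) - (1 - b) * J b 1
                        = J b n - J b 1) (at_left 1)"
          using ev01
        proof (rule eventually_mono)
          fix b :: real assume b: "0 < b \<and> b < 1"
          have "J b n = stage_cost U lam n False + b * J b (Suc n)"
            using Jthr_step[OF U0 lam0, where b=b and \<Delta>=n and \<eta>=\<eta>bar] b thrL[OF n1] step.hyps(2)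
            unfolding J_def by (simp add: succ_def)
          then show "stage_cost U lam n False + b * (J b (Suc n) - J b 1) - (1 - b) * J b 1 = J b n - J b 1"
            by (simp add: algebra_simps)
        qed
        ultimately show ?case by (blast intro: Lim_transform_eventually)
      qed
    qed
  qed
  define f where "f = (\<lambda>\<Delta>. Lim (at_left (1::real)) (\<lambda>b. J b \<Delta> - J b 1))"
  have flim: "((\<lambda>b. J b \<Delta> - J b 1) \<longlongrightarrow> f \<Delta>) (at_left 1)" if "1 \<le> \<Delta>" for \<Delta>
    using rel[OF that] tendsto_Lim[OF trivial_limit_at_left_real] unfolding f_def by blast
  have Jlim: "((\<lambda>b. (1 - b) * J b \<Delta>) \<longlongrightarrow> g) (at_left 1)" if "1 \<le> \<Delta>" for \<Delta>
  proof -
    have "((\<lambda>b. (1 - b) * J b 1 + (1 - b) * (J b \<Delta> - J b 1)) \<longlongrightarrow> g + (1 - 1) * f \<Delta>) (at_left 1)"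
      by (intro tendsto_intros J1lim flim[OF that] id1)
    then show ?thesis by (simp add: algebra_simps)
  qed
  have f1: "f 1 = 0"
  proof -
    have "((\<lambda>b. J b 1 - J b 1) \<longlongrightarrow> 0) (at_left (1::real))" by simp
    then show ?thesis using tendsto_unique[OF trivial_limit_at_left_real flim[of 1]] by simp
  qed
  have P1: "\<forall>\<Delta>\<ge>1. ((\<lambda>b. (1 - b) * Vdisc U lam b \<Delta>) \<longlongrightarrow> g) (at_left 1)"
  proof (intro allI impI)
    fix \<Delta> :: nat assume \<Delta>: "1 \<le> \<Delta>"
    have "((\<lambda>b. g - (1 - b) * (w \<Delta> + lam)) \<longlongrightarrow> g - (1 - 1) * (w \<Delta> + lam)) (at_left 1)"
      by (intro tendsto_intros id1)
    then have lo: "((\<lambda>b. g - (1 - b) * (w \<Delta> + lam)) \<longlongrightarrow> g) (at_left 1)" by simp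
    have ev_lo: "eventually (\<lambda>b. g - (1 - b) * (w \<Delta> + lam) \<le> (1 - b) * Vdisc U lam b \<Delta>) (at_left 1)"
      using ev01
    proof (rule eventually_mono)
      fix b :: real assume b: "0 < b \<and> b < 1"
      have "(1 - b) * (g / (1 - b) - w \<Delta> - lam) \<le> (1 - b) * Vdisc U lam b \<Delta>"
        using Vlow[of b \<Delta>] b \<Delta> by (intro mult_left_mono) auto
      moreover have "(1 - b) * (g / (1 - b) - w \<Delta> - lam) = g - (1 - b) * (w \<Delta> + lam)"
        using b by (simp add: field_simps)
      ultimately show "g - (1 - b) * (w \<Delta> + lam) \<le> (1 - b) * Vdisc U lam b \<Delta>" by simp
    qed
    have ev_up: "eventually (\<lambda>b. (1 - b) * Vdisc U lam b \<Delta> \<le> (1 - b) * J b \<Delta>) (at_left 1)"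
      using ev01 by (rule eventually_mono) (intro mult_left_mono Vup, auto)
    show "((\<lambda>b. (1 - b) * Vdisc U lam b \<Delta>) \<longlongrightarrow> g) (at_left 1)"
      by (rule tendsto_sandwich[OF ev_lo ev_up lo Jlim[OF \<Delta>]])
  qed
  have fseq: "(\<lambda>j. J (\<gamma> j) \<Delta> - J (\<gamma> j) 1) \<longlonglongrightarrow> f \<Delta>" if "1 \<le> \<Delta>" for \<Delta>
    using filterlim_compose[OF flim[OF that] \<gamma>fl] .
  have gseq: "(\<lambda>j. (1 - \<gamma> j) * J (\<gamma> j) 1) \<longlonglongrightarrow> g"
    using filterlim_compose[OF J1lim \<gamma>fl] .
  have P2: "\<forall>\<Delta>\<ge>1. (\<lambda>j. Vdisc U lam (\<gamma> j) \<Delta> - Vdisc U lam (\<gamma> j) 1) \<longlonglongrightarrow> f \<Delta>"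
    using fseq Vg by simp
  have lhs: "(\<lambda>j. J (\<gamma> j) \<Delta> - \<gamma> j * J (\<gamma> j) 1) \<longlonglongrightarrow> f \<Delta> + g" if "1 \<le> \<Delta>" for \<Delta>
  proof -
    have "(\<lambda>j. (J (\<gamma> j) \<Delta> - J (\<gamma> j) 1) + (1 - \<gamma> j) * J (\<gamma> j) 1) \<longlonglongrightarrow> f \<Delta> + g"
      by (intro tendsto_intros fseq[OF that] gseq)
    then show ?thesis by (simp add: algebra_simps)
  qed
  have P3: "g + f \<Delta> = min (stage_cost U lam \<Delta> False + f (succ \<Delta> False))
                               (stage_cost U lam \<Delta> True + f (succ \<Delta> True))" if \<Delta>: "1 \<le> \<Delta>" for \<Delta>
  proof -
    have eq: "J (\<gamma> j) \<Delta> - \<gamma> j * J (\<gamma> j) 1 = min (stage_cost U lam \<Delta> False + \<gamma> j * (J (\<gamma> j) (Suc \<Delta>) - J (\<gamma> j) 1))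
                                                 (stage_cost U lam \<Delta> True)" for j
    proof -
      have "Vdisc U lam (\<gamma> j) \<Delta> = min (stage_cost U lam \<Delta> False + \<gamma> j * Vdisc U lam (\<gamma> j) (Suc \<Delta>))
                                (stage_cost U lam \<Delta> True + \<gamma> j * Vdisc U lam (\<gamma> j) 1)"
      proof -
        have "0 < \<gamma> j \<and> \<gamma> j < 1" by (rule \<gamma>01)
        then have "\<forall>\<Delta>\<ge>1. Vdisc U lam (\<gamma> j) \<Delta> = min (stage_cost U lam \<Delta> False + \<gamma> j * Vdisc U lam (\<gamma> j) (succ \<Delta> False))
                                (stage_cost U lam \<Delta> True + \<gamma> j * Vdisc U lam (\<gamma> j) (succ \<Delta> True))"
          using bellman by blast
        from this[rule_format, OF \<Delta>] show ?thesis unfolding succ_def by (simp only: if_True if_False)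
      qed
      then have "J (\<gamma> j) \<Delta> = min (stage_cost U lam \<Delta> False + \<gamma> j * J (\<gamma> j) (Suc \<Delta>))
                                (stage_cost U lam \<Delta> True + \<gamma> j * J (\<gamma> j) 1)"
        using Vg \<Delta> by simp
      then show ?thesis by (simp add: min_def algebra_simps)
    qed
    have "(\<lambda>j. min (stage_cost U lam \<Delta> False + \<gamma> j * (J (\<gamma> j) (Suc \<Delta>) - J (\<gamma> j) 1))
                   (stage_cost U lam \<Delta> True))
          \<longlonglongrightarrow> min (stage_cost U lam \<Delta> False + 1 * f (Suc \<Delta>)) (stage_cost U lam \<Delta> True)"
      by (intro tendsto_intros \<gamma>lim fseq) simp
    then have "(\<lambda>j. J (\<gamma> j) \<Delta> - \<gamma> j * J (\<gamma> j) 1)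
          \<longlonglongrightarrow> min (stage_cost U lam \<Delta> False + 1 * f (Suc \<Delta>)) (stage_cost U lam \<Delta> True)"
      unfolding eq .
    then have "f \<Delta> + g = min (stage_cost U lam \<Delta> False + 1 * f (Suc \<Delta>)) (stage_cost U lam \<Delta> True)"
      using LIMSEQ_unique[OF lhs[OF \<Delta>]] by blast
    moreover have "f (Suc 0) = 0" using f1 by simp
    ultimately show ?thesis by (simp add: succ_def add.commute)
  qed
  have P4: "g + f \<Delta> = stage_cost U lam \<Delta> (thr \<eta>bar \<Delta>) + f (succ \<Delta> (thr \<eta>bar \<Delta>))" if \<Delta>: "1 \<le> \<Delta>" for \<Delta>
  proof -
    define s where "s = succ \<Delta> (thr \<eta>bar \<Delta>)"
    have s1: "1 \<le> s" unfolding s_def by (rule succ_ge1)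
    have eq: "J (\<gamma> j) \<Delta> - \<gamma> j * J (\<gamma> j) 1 = stage_cost U lam \<Delta> (thr \<eta>bar \<Delta>) + \<gamma> j * (J (\<gamma> j) s - J (\<gamma> j) 1)" for j
    proof -
      have "J (\<gamma> j) \<Delta> = stage_cost U lam \<Delta> (thr \<eta>bar \<Delta>) + \<gamma> j * J (\<gamma> j) s"
        unfolding J_def s_def using \<gamma>01[of j] by (intro Jthr_step[OF U0 lam0]) auto
      then show ?thesis by (simp add: algebra_simps)
    qed
    have "(\<lambda>j. stage_cost U lam \<Delta> (thr \<eta>bar \<Delta>) + \<gamma> j * (J (\<gamma> j) s - J (\<gamma> j) 1))
          \<longlonglongrightarrow> stage_cost U lam \<Delta> (thr \<eta>bar \<Delta>) + 1 * f s"
      by (intro tendsto_intros \<gamma>lim fseq s1)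
    then have "(\<lambda>j. J (\<gamma> j) \<Delta> - \<gamma> j * J (\<gamma> j) 1) \<longlonglongrightarrow> stage_cost U lam \<Delta> (thr \<eta>bar \<Delta>) + 1 * f s"
      unfolding eq .
    then have "f \<Delta> + g = stage_cost U lam \<Delta> (thr \<eta>bar \<Delta>) + 1 * f s"
      using LIMSEQ_unique[OF lhs[OF \<Delta>]] by blast
    then show ?thesis unfolding s_def by simp
  qed
  have lim_over: "(\<lambda>m. ereal (g + C / real m)) \<longlonglongrightarrow> ereal g" for C
  proof -
    have "(\<lambda>m. g + C / real m) \<longlonglongrightarrow> g + 0"
      by (intro tendsto_intros)
    then show ?thesis by (intro tendsto_ereal) simp
  qed
  have Ls: "limsup (\<lambda>m. ereal (g + C / real m)) = ereal g" for C
    by (rule lim_imp_Limsup[OF trivial_limit_sequentially lim_over])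
  have avg_low: "ereal g \<le> avg_cost U lam \<Delta> d" if \<Delta>: "1 \<le> \<Delta>" for \<Delta> d
  proof -
    define K where "K = w \<Delta> + lam"
    have "eventually (\<lambda>m. ereal (g + (g - K) / real m) \<le>
            ereal ((1 / real m) * (\<Sum>k\<le>m. stage_cost U lam (age \<Delta> d k) (d k)))) sequentially"
      unfolding eventually_sequentially
    proof (intro exI[of _ 1] allI impI)
      fix m :: nat assume m: "1 \<le> m"
      have "g * (\<Sum>k<Suc m. 1^k) + 1^(Suc m) * (w (age \<Delta> d (Suc m)) + lam) - w \<Delta> - lam
            \<le> (\<Sum>k<Suc m. 1^k * stage_cost U lam (age \<Delta> d k) (d k))"
        unfolding w_def by (rule pot_sum[OF U0 lam0 star \<Delta>]) auto
      moreover have "0 \<le> w (age \<Delta> d (Suc m)) + lam"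
        unfolding w_def by (rule wpot_lam[OF U0 lam0 star])
      ultimately have "g * (real m + 1) - K \<le> (\<Sum>k\<le>m. stage_cost U lam (age \<Delta> d k) (d k))"
        unfolding K_def by (simp add: lessThan_Suc_atMost algebra_simps)
      then have "(g * (real m + 1) - K) / real m \<le> (\<Sum>k\<le>m. stage_cost U lam (age \<Delta> d k) (d k)) / real m"
        using m by (intro divide_right_mono) auto
      moreover have "(g * (real m + 1) - K) / real m = g + (g - K) / real m"
        using m by (simp add: field_simps)
      ultimately show "ereal (g + (g - K) / real m) \<le>
            ereal ((1 / real m) * (\<Sum>k\<le>m. stage_cost U lam (age \<Delta> d k) (d k)))" by simp
    qed
    then have "limsup (\<lambda>m. ereal (g + (g - K) / real m)) \<le> avg_cost U lam \<Delta> d"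
      unfolding avg_cost_def by (rule Limsup_mono)
    then show ?thesis using Ls by simp
  qed
  have eqL: "stage_cost U lam a (thr \<eta>bar a) = g + w (succ a (thr \<eta>bar a)) - w a"
    if a1: "1 \<le> a" and aL: "a \<le> L" for a
  proof (cases "a < L")
    case True
    then have "\<not> thr \<eta>bar a" using thrL[OF a1] by simp
    then show ?thesis unfolding w_def using a1 by (simp add: succ_def wpot_Suc stage_cost_def)
  next
    case False
    then have aL': "a = L" using aL by simp
    then have th: "thr \<eta>bar a" using thrL[OF a1] by simp
    have "g * real L = Nf L 1" unfolding g_def using L1 by simp
    then have "w (Suc L) = - lam" unfolding w_def wpot_def Nf_def by (simp add: sum_subtractf mult.commute)
    moreover have "w (Suc L) = w L + U L - g" unfolding w_def using L1 by (rule wpot_Suc)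
    ultimately show ?thesis using th aL' unfolding w_def by (simp add: succ_def wpot_1 wpot_Suc0 stage_cost_def)
  qed
  define W where "W = (\<Sum>k<L. \<bar>U (Suc k) - g\<bar>)"
  have Wb: "\<bar>w a\<bar> \<le> W" if "a \<le> L" for a
  proof -
    have "\<bar>w a\<bar> \<le> (\<Sum>k<a-1. \<bar>U (Suc k) - g\<bar>)" unfolding w_def wpot_def by (rule sum_abs)
    also have "\<dots> \<le> W" unfolding W_def using that by (intro sum_mono2) auto
    finally show ?thesis .
  qed
  have avg_up: "avg_cost U lam \<Delta> (stat_acts (thr \<eta>bar) \<Delta>) \<le> ereal g" if \<Delta>: "1 \<le> \<Delta>" for \<Delta>
  proof -
    define a where "a = sage (thr \<eta>bar) \<Delta>"
    define c where "c = (\<lambda>k. stage_cost U lam (a k) (thr \<eta>bar (a k)))"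
    have ain: "1 \<le> a (Suc k) \<and> a (Suc k) \<le> L" for k
      unfolding a_def by (auto simp: succ_def thr_def L_def)
    have sumid: "(\<Sum>k<Suc m. c k) = c 0 + real m * g + w (a (Suc m)) - w (a 1)" for m
    proof (induction m)
      case 0 then show ?case by simp
    next
      case (Suc m)
      have "c (Suc m) = g + w (succ (a (Suc m)) (thr \<eta>bar (a (Suc m)))) - w (a (Suc m))"
        unfolding c_def using ain[of m] by (intro eqL) auto
      moreover have "a (Suc (Suc m)) = succ (a (Suc m)) (thr \<eta>bar (a (Suc m)))" unfolding a_def by simp
      ultimately show ?case using Suc by (simp add: algebra_simps)
    qed
    define C where "C = c 0 + 2 * W"
    have "eventually (\<lambda>m. ereal ((1 / real m) * (\<Sum>k\<le>m. stage_cost U lam (age \<Delta> (stat_acts (thr \<eta>bar) \<Delta>) k) (stat_acts (thr \<eta>bar) \<Delta> k)))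
             \<le> ereal (g + C / real m)) sequentially"
      unfolding eventually_sequentially
    proof (intro exI[of _ 1] allI impI)
      fix m :: nat assume m: "1 \<le> m"
      have "(\<Sum>k\<le>m. stage_cost U lam (age \<Delta> (stat_acts (thr \<eta>bar) \<Delta>) k) (stat_acts (thr \<eta>bar) \<Delta> k)) = (\<Sum>k<Suc m. c k)"
        unfolding c_def a_def age_stat stat_acts_def by (simp add: lessThan_Suc_atMost)
      also have "\<dots> \<le> c 0 + real m * g + 2 * W"
        unfolding sumid using Wb[of "a (Suc m)"] Wb[of "a 1"] ain[of m] ain[of 0] by auto
      finally have "(\<Sum>k\<le>m. stage_cost U lam (age \<Delta> (stat_acts (thr \<eta>bar) \<Delta>) k) (stat_acts (thr \<eta>bar) \<Delta> k)) / real m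
            \<le> (c 0 + real m * g + 2 * W) / real m"
        using m by (intro divide_right_mono) auto
      moreover have "(c 0 + real m * g + 2 * W) / real m = g + C / real m"
        unfolding C_def using m by (simp add: field_simps)
      ultimately show "ereal ((1 / real m) * (\<Sum>k\<le>m. stage_cost U lam (age \<Delta> (stat_acts (thr \<eta>bar) \<Delta>) k) (stat_acts (thr \<eta>bar) \<Delta> k)))
             \<le> ereal (g + C / real m)" by simp
    qed
    then have "avg_cost U lam \<Delta> (stat_acts (thr \<eta>bar) \<Delta>) \<le> limsup (\<lambda>m. ereal (g + C / real m))"
      unfolding avg_cost_def by (rule Limsup_mono)
    then show ?thesis using Ls by simp
  qed
  show ?thesis
  proof (rule exI[of _ g], rule exI[of _ f], intro conjI)
    show "\<forall>\<Delta>\<ge>1. ((\<lambda>b. (1 - b) * Vdisc U lam b \<Delta>) \<longlongrightarrow> g) (at_left 1)" by (rule P1)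
    show "\<exists>\<gamma> :: nat \<Rightarrow> real. (\<forall>j. 0 < \<gamma> j \<and> \<gamma> j < 1) \<and> \<gamma> \<longlonglongrightarrow> 1 \<and>
        (\<forall>\<Delta>\<ge>1. (\<lambda>j. Vdisc U lam (\<gamma> j) \<Delta> - Vdisc U lam (\<gamma> j) 1) \<longlonglongrightarrow> f \<Delta>)"
      using \<gamma>01 \<gamma>lim P2 by blast
    show "\<forall>\<Delta>\<ge>1. g + f \<Delta> = min (stage_cost U lam \<Delta> False + f (succ \<Delta> False))
                               (stage_cost U lam \<Delta> True + f (succ \<Delta> True))"
      using P3 by blast
    show "\<forall>\<Delta>\<ge>1. stage_cost U lam \<Delta> (thr \<eta>bar \<Delta>) + f (succ \<Delta> (thr \<eta>bar \<Delta>))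
              = min (stage_cost U lam \<Delta> False + f (succ \<Delta> False))
                    (stage_cost U lam \<Delta> True + f (succ \<Delta> True))"
      using P3 P4 by metis
    show "\<forall>\<Delta>\<ge>1. \<forall>d. avg_cost U lam \<Delta> (stat_acts (thr \<eta>bar) \<Delta>) \<le> avg_cost U lam \<Delta> d"
      using avg_up avg_low order_trans by blast
  qed


qed

end
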